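(* Let $G$ be a finite simple connected graph and $H$ a connected subgraph of $G$. If $\beta(H)=n(H)-t$ and $d_H(u,v)=d_G(u,v)$ for all pairs of vertices $u,v$ of $H$, then $\beta(G)\le n(G)-t$.
   Context: $n(X)$ denotes the number of vertices of a graph $X$ and $d_X$ its shortest-path distance. For an ordered set $W=\{w_1,\dots,w_k\}$ of vertices of a connected graph $X$, $r(v|W)=(d_X(v,w_1),\dots,d_X(v,w_k))$; $W$ is a resolving set if distinct vertices have distinct vectors $r(\cdot|W)$, and $\beta(X)$, the metric dimension, is the minimum size of a resolving set. *)

theory Defs
  imports Main
begin

type_synonym 'a graph = "'a set \<times> 'a set set"

definition verts :: "'a graph \<Rightarrow> 'a set" where "verts G = fst G"
definition edges :: "'a graph \<Rightarrow> 'a set set" where "edges G = snd G"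

definition finite_simple_graph :: "'a graph \<Rightarrow> bool" where
  "finite_simple_graph G \<longleftrightarrow> finite (verts G) \<and>
     (\<forall>e\<in>edges G. \<exists>u v. e = {u, v} \<and> u \<noteq> v \<and> u \<in> verts G \<and> v \<in> verts G)"

definition nv :: "'a graph \<Rightarrow> nat" where "nv G = card (verts G)"

definition is_walk :: "'a graph \<Rightarrow> 'a list \<Rightarrow> bool" where
  "is_walk G p \<longleftrightarrow> p \<noteq> [] \<and> set p \<subseteq> verts G \<and>
     (\<forall>i < length p - 1. {p ! i, p ! Suc i} \<in> edges G)"

definition walk_betw :: "'a graph \<Rightarrow> 'a \<Rightarrow> 'a list \<Rightarrow> 'a \<Rightarrow> bool" where
  "walk_betw G u p v \<longleftrightarrow> is_walk G p \<and> hd p = u \<and> last p = v"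

definition connected_graph :: "'a graph \<Rightarrow> bool" where
  "connected_graph G \<longleftrightarrow> verts G \<noteq> {} \<and>
     (\<forall>u\<in>verts G. \<forall>v\<in>verts G. \<exists>p. walk_betw G u p v)"

definition dist :: "'a graph \<Rightarrow> 'a \<Rightarrow> 'a \<Rightarrow> nat" where
  "dist G u v = (LEAST n. \<exists>p. walk_betw G u p v \<and> length p = Suc n)"

definition subgraph :: "'a graph \<Rightarrow> 'a graph \<Rightarrow> bool" where
  "subgraph H G \<longleftrightarrow> finite_simple_graph H \<and>
     verts H \<subseteq> verts G \<and> edges H \<subseteq> edges G"

definition resolving_set :: "'a graph \<Rightarrow> 'a set \<Rightarrow> bool" where
  "resolving_set G W \<longleftrightarrow> W \<subseteq> verts G \<and>
     (\<forall>u\<in>verts G. \<forall>v\<in>verts G. (\<forall>w\<in>W. dist G u w = dist G v w) \<longrightarrow> u = v)"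

definition metric_dim :: "'a graph \<Rightarrow> nat" where
  "metric_dim G = (LEAST k. \<exists>W. resolving_set G W \<and> card W = k)"

end

theory Submission
  imports Defs
begin

lemma dist_refl: "u \<in> verts G \<Longrightarrow> dist G u u = 0"
  unfolding dist_def
  apply (rule Least_eq_0)
  apply (rule exI[of _ "[u]"])
  by (simp add: walk_betw_def is_walk_def)

lemma dist_zero:
  assumes "connected_graph G" "u \<in> verts G" "v \<in> verts G" "dist G u v = 0"
  shows "u = v"
proof -
  obtain p where "walk_betw G u p v" using assms unfolding connected_graph_def by blast
  moreover have "p \<noteq> []" using calculation by (simp add: walk_betw_def is_walk_def)
  ultimately have "\<exists>n p. walk_betw G u p v \<and> length p = Suc n"
    by (metis length_greater_0_conv Suc_pred)
  from LeastI_ex[OF this] obtain q where q: "walk_betw G u q v" "length q = Suc (dist G u v)"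
    unfolding dist_def by blast
  then obtain x where "q = [x]" using assms(4) by (cases q) auto
  with q show ?thesis by (auto simp add: walk_betw_def)
qed

lemma resolving_verts:
  assumes "connected_graph G" shows "resolving_set G (verts G)"
  unfolding resolving_set_def
proof (intro conjI ballI impI subset_refl)
  fix u v assume u: "u \<in> verts G" and v: "v \<in> verts G"
    and eq: "\<forall>w\<in>verts G. dist G u w = dist G v w"
  have "dist G u v = 0" using eq v dist_refl[OF v] by simp
  thus "u = v" using dist_zero[OF assms u v] by simp
qed

theorem proposition2p5:
  fixes G H :: "'a graph" and t :: int
  assumes "finite_simple_graph G" and "connected_graph G"
    and "subgraph H G" and "connected_graph H"
    and "int (metric_dim H) = int (nv H) - t"
    and "\<forall>u\<in>verts H. \<forall>v\<in>verts H. dist H u v = dist G u v"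
  shows "int (metric_dim G) \<le> int (nv G) - t"
proof -
  have finG: "finite (verts G)" using assms(1) by (simp add: finite_simple_graph_def)
  have sub: "verts H \<subseteq> verts G" using assms(3) by (simp add: subgraph_def)
  have finH: "finite (verts H)" using finG sub finite_subset by blast
  have "\<exists>W. resolving_set H W \<and> card W = card (verts H)"
    using resolving_verts[OF assms(4)] by blast
  hence "\<exists>k W. resolving_set H W \<and> card W = k" by blast
  from LeastI_ex[OF this] obtain W where W: "resolving_set H W" "card W = metric_dim H"
    unfolding metric_dim_def by blast
  have WH: "W \<subseteq> verts H" using W(1) by (simp add: resolving_set_def)
  define W' where "W' = W \<union> (verts G - verts H)"
  have res: "resolving_set G W'"
    unfolding resolving_set_def
  proof (intro conjI ballI impI)
    show "W' \<subseteq> verts G" using WH sub W'_def by blast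
  next
    fix u v assume u: "u \<in> verts G" and v: "v \<in> verts G"
      and eq: "\<forall>w\<in>W'. dist G u w = dist G v w"
    show "u = v"
    proof (cases "u \<in> verts H \<and> v \<in> verts H")
      case True
      have "\<forall>w\<in>W. dist H u w = dist H v w" using eq True WH assms(6) W'_def by auto
      thus ?thesis using W(1) True unfolding resolving_set_def by blast
    next
      case False
      show ?thesis
      proof (cases "u \<in> verts H")
        case True
        hence vW: "v \<in> W'" using False v W'_def by blast
        have "dist G u v = 0" using eq vW dist_refl[OF v] by simp
        thus ?thesis using dist_zero[OF assms(2) u v] by simp
      next
        case False
        hence uW: "u \<in> W'" using u W'_def by blast
        have "dist G v u = 0" using eq uW dist_refl[OF u] by simp
        thus ?thesis using dist_zero[OF assms(2) v u] by simp
      qed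
    qed
  qed
  have "metric_dim G \<le> card W'"
    unfolding metric_dim_def by (rule Least_le) (use res in blast)
  moreover have "card W' = card W + (card (verts G) - card (verts H))"
  proof -
    have "finite W" using WH finH finite_subset by blast
    moreover have "W \<inter> (verts G - verts H) = {}" using WH by blast
    ultimately have "card W' = card W + card (verts G - verts H)"
      unfolding W'_def using finG by (simp add: card_Un_disjoint)
    thus ?thesis using card_Diff_subset[OF finH sub] by simp
  qed
  moreover have "card (verts H) \<le> card (verts G)" using card_mono[OF finG sub] .
  ultimately show ?thesis using W(2) assms(5) unfolding nv_def by linarith
qed

end
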